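(* Assume $FCA^\Delta$. Then there is an entangled set of reals, i.e. an uncountable $\mathcal{E}\subseteq\mathbb{R}$ which is $k$-entangled for every $k\in\omega$.
   Context: For a finite set $a$ of reals, $a(i)$ is its $i$-th element in increasing order. An uncountable $\mathcal{E}\subseteq\mathbb{R}$ is $k$-entangled if for every uncountable family $\mathcal{A}\subseteq[\mathcal{E}]^k$ of pairwise disjoint sets and every $t:k\to\{<,>\}$ there are distinct $a,b\in\mathcal{A}$ with $a(i)\ t(i)\ b(i)$ for all $i<k$. $FCA^\Delta$ is the statement: for every good type $\tau$ there is a fully $\Delta$-capturing construction scheme of type $\tau$ over $\omega_1$. Definitions: a type is a sequence $\tau=\langle m_k,n_{k+1},r_{k+1}\rangle_{k\in\omega}$ of natural numbers with $m_0=1$ and, for all $k$, $n_{k+1}\geq2$, $m_k>r_{k+1}$, $m_{k+1}=r_{k+1}+(m_k-r_{k+1})n_{k+1}$; good if every $r$ equals $r_k$ for infinitely many $k\geq1$. $A<B$ means every element of $A$ is below every element of $B$; $D(a)$ is the $a$-th element of a finite set of ordinals $D$. A construction scheme of type $\tau$ over a set of ordinals $Y$ is a family $\mathcal{F}$ of nonempty finite subsets of $Y$, cofinal among finite subsets of $Y$ under $\subseteq$, each of size $m_k$ for some $k$, with $\mathcal{F}_k=\{F\in\mathcal{F}:|F|=m_k\}$ satisfying: (i) for $E,F\in\mathcal{F}_k$, $E\cap F$ is an initial segment of both; (ii) every $F\in\mathcal{F}_{k+1}$ equals $F_0\cup\dots\cup F_{n_{k+1}-1}$ with $F_i\in\mathcal{F}_k$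 a $\Delta$-system with root $R(F)$, $|R(F)|=r_{k+1}$, $R(F)<F_0\setminus R(F)<\dots<F_{n_{k+1}-1}\setminus R(F)$. $\rho(\alpha,\beta)=\min\{k:\exists F\in\mathcal{F}_k\ \{\alpha,\beta\}\subseteq F\}$; $\lVert\alpha\rVert_k=|\{\xi<\alpha:\rho(\xi,\alpha)\leq k\}|$; $\Delta(\alpha,\beta)=\min\{k:\lVert\alpha\rVert_k\neq\lVert\beta\rVert_k\}$ ($\omega$ if none); for $k\geq1$, $\Xi_\alpha(k)=-1$ if $\alpha\in R(F)$, $=i$ if $\alpha\in F_i\setminus R(F)$, for any $F\in\mathcal{F}_k$ containing $\alpha$. A root-tail-tail $\Delta$-system is a sequence $\langle D_i\rangle_{i<n}$, $n\geq2$, of finite sets of ordinals of common size $m$ with pairwise intersections $R$, $R<D_i\setminus R$, $D_0\setminus R<\dots<D_{n-1}\setminus R$; $r=|R|$. It is fully $\Delta$-captured at level $l\geq1$ if $n=n_l$, (I) $\Xi_{D_i(a)}(l)=-1$ for $a<r$ and $=i$ for $a\geq r$ ($i<n$, $a<m$), and (II) $\Delta(D_i(a),D_j(a))=l$ for $i<j<n$, $r\leq a<m$. A scheme over $\omega_1$ is fully $\Delta$-capturing if for every uncountable family $\mathcal{S}$ of nonempty finite subsets of $\omega_1$ there are infinitely many $l$ for which some $n_l$ distinct members of $\mathcal{S}$, suitably enumerated, form a root-tail-tail $\Delta$-system fully $\Delta$-captured at level $l$. *)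

theory Defs
  imports Main "HOL-Library.Countable_Set" "HOL-Library.Extended_Nat"
begin

text \<open>omega_1 is modelled as a well-ordered type whose universe is uncountable
and all of whose proper initial segments are countable (i.e. of order type omega_1).\<close>

definition is_omega1 :: "'a::wellorder itself \<Rightarrow> bool" where
  "is_omega1 _ \<longleftrightarrow> uncountable (UNIV :: 'a set) \<and> (\<forall>x::'a. countable {y. y < x})"

definition setless :: "'a::linorder set \<Rightarrow> 'a set \<Rightarrow> bool" where
  "setless A B \<longleftrightarrow> (\<forall>x\<in>A. \<forall>y\<in>B. x < y)"

definition elt :: "'a::linorder set \<Rightarrow> nat \<Rightarrow> 'a" where
  "elt A i = sorted_list_of_set A ! i"

text \<open>Types <m_k, n_(k+1), r_(k+1)>; values n 0 and r 0 are irrelevant.\<close>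
definition is_type :: "(nat \<Rightarrow> nat) \<Rightarrow> (nat \<Rightarrow> nat) \<Rightarrow> (nat \<Rightarrow> nat) \<Rightarrow> bool" where
  "is_type m n r \<longleftrightarrow> m 0 = 1 \<and>
     (\<forall>k. n (Suc k) \<ge> 2 \<and> m k > r (Suc k) \<and>
          m (Suc k) = r (Suc k) + (m k - r (Suc k)) * n (Suc k))"

definition good_type :: "(nat \<Rightarrow> nat) \<Rightarrow> (nat \<Rightarrow> nat) \<Rightarrow> (nat \<Rightarrow> nat) \<Rightarrow> bool" where
  "good_type m n r \<longleftrightarrow> is_type m n r \<and> (\<forall>q. infinite {k. k \<ge> 1 \<and> r k = q})"

definition level :: "'a set set \<Rightarrow> (nat \<Rightarrow> nat) \<Rightarrow> nat \<Rightarrow> 'a set set" where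
  "level F m k = {A\<in>F. card A = m k}"

definition init_seg :: "'a::linorder set \<Rightarrow> 'a set \<Rightarrow> bool" where
  "init_seg S A \<longleftrightarrow> S \<subseteq> A \<and> (\<forall>x\<in>S. \<forall>y\<in>A. y < x \<longrightarrow> y \<in> S)"

definition decomp :: "'a::linorder set set \<Rightarrow> (nat \<Rightarrow> nat) \<Rightarrow> (nat \<Rightarrow> nat) \<Rightarrow> (nat \<Rightarrow> nat)
    \<Rightarrow> nat \<Rightarrow> 'a set \<Rightarrow> (nat \<Rightarrow> 'a set) \<Rightarrow> 'a set \<Rightarrow> bool" where
  "decomp F m n r k A Fs R \<longleftrightarrow>
     A = (\<Union>i<n (Suc k). Fs i) \<and>
     (\<forall>i<n (Suc k). Fs i \<in> level F m k) \<and>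
     card R = r (Suc k) \<and>
     (\<forall>i<n (Suc k). \<forall>j<n (Suc k). i \<noteq> j \<longrightarrow> Fs i \<inter> Fs j = R) \<and>
     setless R (Fs 0 - R) \<and>
     (\<forall>i. Suc i < n (Suc k) \<longrightarrow> setless (Fs i - R) (Fs (Suc i) - R))"

definition scheme :: "'a::linorder set set \<Rightarrow> (nat \<Rightarrow> nat) \<Rightarrow> (nat \<Rightarrow> nat) \<Rightarrow> (nat \<Rightarrow> nat)
    \<Rightarrow> 'a set \<Rightarrow> bool" where
  "scheme F m n r Y \<longleftrightarrow>
     (\<forall>A\<in>F. A \<noteq> {} \<and> finite A \<and> A \<subseteq> Y) \<and>
     (\<forall>B. finite B \<and> B \<subseteq> Y \<longrightarrow> (\<exists>A\<in>F. B \<subseteq> A)) \<and>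
     (\<forall>A\<in>F. \<exists>k. card A = m k) \<and>
     (\<forall>k. \<forall>A\<in>level F m k. \<forall>B\<in>level F m k. init_seg (A \<inter> B) A \<and> init_seg (A \<inter> B) B) \<and>
     (\<forall>k. \<forall>A\<in>level F m (Suc k). \<exists>Fs R. decomp F m n r k A Fs R)"

definition rho :: "'a set set \<Rightarrow> (nat \<Rightarrow> nat) \<Rightarrow> 'a \<Rightarrow> 'a \<Rightarrow> nat" where
  "rho F m \<alpha> \<beta> = (LEAST k. \<exists>A\<in>level F m k. {\<alpha>, \<beta>} \<subseteq> A)"

definition normk :: "'a::linorder set set \<Rightarrow> (nat \<Rightarrow> nat) \<Rightarrow> 'a \<Rightarrow> nat \<Rightarrow> nat" where
  "normk F m \<alpha> k = card {\<xi>. \<xi> < \<alpha> \<and> rho F m \<xi> \<alpha> \<le> k}"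

definition Delta :: "'a::linorder set set \<Rightarrow> (nat \<Rightarrow> nat) \<Rightarrow> 'a \<Rightarrow> 'a \<Rightarrow> enat" where
  "Delta F m \<alpha> \<beta> = (if \<exists>k. normk F m \<alpha> k \<noteq> normk F m \<beta> k
      then enat (LEAST k. normk F m \<alpha> k \<noteq> normk F m \<beta> k) else \<infinity>)"

text \<open>Xi_alpha(l) for l >= 1\<close>
definition Xi :: "'a::linorder set set \<Rightarrow> (nat \<Rightarrow> nat) \<Rightarrow> (nat \<Rightarrow> nat) \<Rightarrow> (nat \<Rightarrow> nat)
    \<Rightarrow> 'a \<Rightarrow> nat \<Rightarrow> int" where
  "Xi F m n r \<alpha> l = (THE v. \<exists>A\<in>level F m l. \<alpha> \<in> A \<and>
      (\<exists>Fs R. decomp F m n r (l - 1) A Fs R \<and>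
         ((\<alpha> \<in> R \<and> v = -1) \<or> (\<exists>i<n l. \<alpha> \<in> Fs i - R \<and> v = int i))))"

text \<open>root-tail-tail Delta-system D 0, ..., D (nn-1); its root is D 0 \<inter> D 1\<close>
definition rtt_system :: "(nat \<Rightarrow> 'a::linorder set) \<Rightarrow> nat \<Rightarrow> bool" where
  "rtt_system D nn \<longleftrightarrow> nn \<ge> 2 \<and>
     (\<exists>mm. \<forall>i<nn. finite (D i) \<and> card (D i) = mm) \<and>
     (\<exists>R. (\<forall>i<nn. \<forall>j<nn. i \<noteq> j \<longrightarrow> D i \<inter> D j = R) \<and>
          (\<forall>i<nn. setless R (D i - R)) \<and>
          (\<forall>i. Suc i < nn \<longrightarrow> setless (D i - R) (D (Suc i) - R)))"

definition fully_captured :: "'a::linorder set set \<Rightarrow> (nat \<Rightarrow> nat) \<Rightarrow> (nat \<Rightarrow> nat) \<Rightarrow> (nat \<Rightarrow> nat)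
    \<Rightarrow> (nat \<Rightarrow> 'a set) \<Rightarrow> nat \<Rightarrow> nat \<Rightarrow> bool" where
  "fully_captured F m n r D nn l \<longleftrightarrow>
     (let mm = card (D 0); rr = card (D 0 \<inter> D 1) in
      l \<ge> 1 \<and> nn = n l \<and>
      (\<forall>i<nn. \<forall>a<mm. Xi F m n r (elt (D i) a) l = (if a < rr then -1 else int i)) \<and>
      (\<forall>i j a. i < j \<and> j < nn \<and> rr \<le> a \<and> a < mm \<longrightarrow>
          Delta F m (elt (D i) a) (elt (D j) a) = enat l))"

definition fully_capturing :: "'a::linorder set set \<Rightarrow> (nat \<Rightarrow> nat) \<Rightarrow> (nat \<Rightarrow> nat) \<Rightarrow> (nat \<Rightarrow> nat)
    \<Rightarrow> bool" where
  "fully_capturing F m n r \<longleftrightarrow>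
     (\<forall>S :: 'a set set. uncountable S \<and> (\<forall>A\<in>S. A \<noteq> {} \<and> finite A) \<longrightarrow>
        infinite {l. \<exists>D. inj_on D {..<n l} \<and> D ` {..<n l} \<subseteq> S \<and>
                        rtt_system D (n l) \<and> fully_captured F m n r D (n l) l})"

definition FCA_Delta :: "'a::wellorder itself \<Rightarrow> bool" where
  "FCA_Delta _ \<longleftrightarrow> (\<forall>m n r. good_type m n r \<longrightarrow>
      (\<exists>F :: 'a set set. scheme F m n r UNIV \<and> fully_capturing F m n r))"

definition k_entangled :: "nat \<Rightarrow> real set \<Rightarrow> bool" where
  "k_entangled k E \<longleftrightarrow> uncountable E \<and>
     (\<forall>\<A>. \<A> \<subseteq> {a. a \<subseteq> E \<and> finite a \<and> card a = k} \<and> uncountable \<A> \<and> pairwise disjnt \<A> \<longrightarrow>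
        (\<forall>t :: nat \<Rightarrow> bool. \<exists>a\<in>\<A>. \<exists>b\<in>\<A>. a \<noteq> b \<and>
            (\<forall>i<k. if t i then elt a i < elt b i else elt a i > elt b i)))"

end

theory Submission
  imports Defs "HOL-Library.Nat_Bijection" Complex_Main
begin

lemma setless_trans: "setless A B \<Longrightarrow> setless B C \<Longrightarrow> B \<noteq> {} \<Longrightarrow> setless (A::'a::linorder set) C"
  unfolding setless_def by (meson ex_in_conv less_trans)

locale sch =
  fixes F :: "'a::linorder set set" and m n r :: "nat \<Rightarrow> nat"
  assumes sc: "scheme F m n r UNIV" and ty: "is_type m n r" and inf: "infinite (UNIV::'a set)"
begin

lemma ty_facts: "n (Suc k) \<ge> 2" "m k > r (Suc k)" "m (Suc k) = r (Suc k) + (m k - r (Suc k)) * n (Suc k)"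
  using ty unfolding is_type_def by auto

lemma m_Suc: "m k < m (Suc k)"
proof -
  have "(m k - r (Suc k)) * 2 \<le> (m k - r (Suc k)) * n (Suc k)"
    using ty_facts(1) by (rule mult_le_mono2)
  then show ?thesis using ty_facts(2,3)[of k] by linarith
qed

lemma m_strict: "strict_mono m"
  by (simp add: m_Suc strict_mono_Suc_iff)

lemma F_props: "A \<in> F \<Longrightarrow> A \<noteq> {} \<and> finite A"
  using sc unfolding scheme_def by auto

lemma F_lev: "A \<in> F \<Longrightarrow> \<exists>k. A \<in> level F m k"
  using sc unfolding scheme_def level_def by auto

lemma lev_F: "A \<in> level F m k \<Longrightarrow> A \<in> F \<and> finite A \<and> card A = m k"
  using F_props unfolding level_def by auto

lemma coh: "A \<in> level F m k \<Longrightarrow> B \<in> level F m k \<Longrightarrow> init_seg (A \<inter> B) A"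
  using sc unfolding scheme_def by blast

lemma dec: "A \<in> level F m (Suc k) \<Longrightarrow> \<exists>Fs R. decomp F m n r k A Fs R"
  using sc unfolding scheme_def by blast

lemma down: "A \<in> level F m k \<Longrightarrow> j \<le> k \<Longrightarrow> x \<in> A \<Longrightarrow> \<exists>C\<in>level F m j. x \<in> C \<and> C \<subseteq> A"
proof (induction k arbitrary: A)
  case 0
  then show ?case by auto
next
  case (Suc k)
  show ?case
  proof (cases "j = Suc k")
    case True
    then show ?thesis using Suc by auto
  next
    case False
    then have jk: "j \<le> k" using Suc by auto
    obtain Fs R where d: "decomp F m n r k A Fs R" using dec Suc by blast
    then obtain i where i: "i < n (Suc k)" "x \<in> Fs i" using Suc.prems(3) unfolding decomp_def by auto
    have "Fs i \<in> level F m k" "Fs i \<subseteq> A" using d i unfolding decomp_def by auto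
    then show ?thesis using Suc.IH[of "Fs i"] jk i by blast
  qed
qed

lemma big: "finite B \<Longrightarrow> \<exists>M\<ge>L. \<exists>G\<in>level F m M. B \<subseteq> G"
proof -
  assume fB: "finite B"
  obtain B0 where B0: "finite B0" "card B0 = Suc (m L)" "B0 \<subseteq> (UNIV::'a set)"
    using infinite_arbitrarily_large[OF inf] by blast
  have "finite (B \<union> B0)" using fB B0 by auto
  then obtain A where A: "A \<in> F" "B \<union> B0 \<subseteq> A" using sc unfolding scheme_def by blast
  obtain M where M: "A \<in> level F m M" using F_lev A by blast
  have "B0 \<subseteq> A" using A by blast
  then have "card B0 \<le> card A" using lev_F[OF M] by (intro card_mono) auto
  then have "m L < m M" using lev_F[OF M] B0 by simp
  then have "L \<le> M" using strict_mono_less[OF m_strict] by simp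
  then show ?thesis using A M by blast
qed

lemma exlev: "\<exists>E\<in>level F m L. x \<in> E"
proof -
  obtain M G where "M \<ge> L" "G \<in> level F m M" "{x} \<subseteq> G" using big[of "{x}" L] by auto
  then show ?thesis using down[of G M L x] by auto
qed

lemma rho_wit: "\<exists>C\<in>level F m (rho F m a b). {a, b} \<subseteq> C"
proof -
  obtain M G where "G \<in> level F m M" "{a, b} \<subseteq> G" using big[of "{a,b}" 0] by auto
  then have "\<exists>k. \<exists>C\<in>level F m k. {a, b} \<subseteq> C" by blast
  then show ?thesis unfolding rho_def by (rule LeastI_ex)
qed

lemma rho_le: "A \<in> level F m k \<Longrightarrow> {a, b} \<subseteq> A \<Longrightarrow> rho F m a b \<le> k"
  unfolding rho_def by (rule Least_le) blast

lemma rho_sym: "rho F m a b = rho F m b a"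
  unfolding rho_def by (simp add: insert_commute)

lemma normpos: "A \<in> level F m k \<Longrightarrow> x \<in> A \<Longrightarrow> normk F m x k = card {\<xi>\<in>A. \<xi> < x}"
proof -
  assume A: "A \<in> level F m k" and x: "x \<in> A"
  have "{\<xi>. \<xi> < x \<and> rho F m \<xi> x \<le> k} = {\<xi>\<in>A. \<xi> < x}"
  proof (intro set_eqI iffI)
    fix \<xi> assume "\<xi> \<in> {\<xi>. \<xi> < x \<and> rho F m \<xi> x \<le> k}"
    then have h: "\<xi> < x" "rho F m \<xi> x \<le> k" by auto
    obtain C where C: "C \<in> level F m (rho F m \<xi> x)" "{\<xi>, x} \<subseteq> C" using rho_wit by blast
    obtain C' where C': "C' \<in> level F m (rho F m \<xi> x)" "x \<in> C'" "C' \<subseteq> A"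
      using down[OF A h(2) x] by blast
    have "init_seg (C \<inter> C') C" using coh C C' by blast
    then have "\<xi> \<in> C \<inter> C'" using C C' h unfolding init_seg_def by blast
    then show "\<xi> \<in> {\<xi>\<in>A. \<xi> < x}" using C' h by auto
  next
    fix \<xi> assume "\<xi> \<in> {\<xi>\<in>A. \<xi> < x}"
    then show "\<xi> \<in> {\<xi>. \<xi> < x \<and> rho F m \<xi> x \<le> k}" using rho_le[OF A] x by auto
  qed
  then show ?thesis unfolding normk_def by simp
qed

lemma normk_lt: "normk F m x k < m k"
proof -
  obtain E where E: "E \<in> level F m k" "x \<in> E" using exlev by blast
  have "{\<xi>\<in>E. \<xi> < x} \<subset> E" using E by auto
  then have "card {\<xi>\<in>E. \<xi> < x} < card E" using lev_F[OF E(1)] psubset_card_mono by blast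
  then show ?thesis using normpos[OF E] lev_F[OF E(1)] by simp
qed

lemma common: "rho F m a b \<le> L \<Longrightarrow> a < b \<Longrightarrow> \<exists>E\<in>level F m L. a \<in> E \<and> b \<in> E"
proof -
  assume h: "rho F m a b \<le> L" "a < b"
  obtain C where C: "C \<in> level F m (rho F m a b)" "{a, b} \<subseteq> C" using rho_wit by blast
  obtain E where E: "E \<in> level F m L" "b \<in> E" using exlev by blast
  obtain E' where E': "E' \<in> level F m (rho F m a b)" "b \<in> E'" "E' \<subseteq> E"
    using down[OF E(1) h(1) E(2)] by blast
  have "init_seg (C \<inter> E') C" using coh C E' by blast
  then have "a \<in> E'" using C E' h unfolding init_seg_def by blast
  then show ?thesis using E E' by blast
qed

lemma norm_inj_lt: "rho F m a b \<le> L \<Longrightarrow> a < b \<Longrightarrow> normk F m a L < normk F m b L"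
proof -
  assume h: "rho F m a b \<le> L" "a < b"
  obtain E where E: "E \<in> level F m L" "a \<in> E" "b \<in> E" using common[OF h] by blast
  have "{\<xi>\<in>E. \<xi> < a} \<subset> {\<xi>\<in>E. \<xi> < b}" using E h by auto
  then have "card {\<xi>\<in>E. \<xi> < a} < card {\<xi>\<in>E. \<xi> < b}"
    using lev_F[OF E(1)] by (intro psubset_card_mono) auto
  then show ?thesis using normpos[OF E(1) E(2)] normpos[OF E(1) E(3)] by simp
qed

lemma norm_inj: "rho F m a b \<le> L \<Longrightarrow> a \<noteq> b \<Longrightarrow> normk F m a L \<noteq> normk F m b L"
proof -
  assume h: "rho F m a b \<le> L" "a \<noteq> b"
  show ?thesis
  proof (cases "a < b")
    case True
    then show ?thesis using norm_inj_lt[OF h(1)] by simp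
  next
    case False
    then have "b < a" using h(2) by simp
    moreover have "rho F m b a \<le> L" using h(1) rho_sym by simp
    ultimately show ?thesis using norm_inj_lt[of b a L] by simp
  qed
qed

lemma norm_sep: "a \<noteq> b \<Longrightarrow> \<exists>k. normk F m a k \<noteq> normk F m b k"
proof -
  assume ab: "a \<noteq> b"
  obtain M G where "G \<in> level F m M" "{a, b} \<subseteq> G" using big[of "{a,b}" 0] by auto
  then have "rho F m a b \<le> M" using rho_le by blast
  then show ?thesis using norm_inj ab by blast
qed

end

context sch
begin

context
  fixes k A Fs R
  assumes D: "decomp F m n r k A Fs R"
begin

lemma D_facts: "A = (\<Union>i<n (Suc k). Fs i)" "\<And>i. i < n (Suc k) \<Longrightarrow> Fs i \<in> level F m k"
  "card R = r (Suc k)" "\<And>i j. i < n (Suc k) \<Longrightarrow> j < n (Suc k) \<Longrightarrow> i \<noteq> j \<Longrightarrow> Fs i \<inter> Fs j = R"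
  "setless R (Fs 0 - R)" "\<And>i. Suc i < n (Suc k) \<Longrightarrow> setless (Fs i - R) (Fs (Suc i) - R)"
  using D unfolding decomp_def by auto

lemma D_sub: "i < n (Suc k) \<Longrightarrow> R \<subseteq> Fs i"
proof -
  assume i: "i < n (Suc k)"
  define j where "j = (if i = 0 then 1 else 0::nat)"
  have "j < n (Suc k)" "j \<noteq> i" using ty_facts(1)[of k] j_def by auto
  then have "Fs i \<inter> Fs j = R" using D_facts(4) i by blast
  then show ?thesis by blast
qed

lemma D_fin: "i < n (Suc k) \<Longrightarrow> finite (Fs i) \<and> card (Fs i) = m k"
  using lev_F D_facts(2) by blast

lemma D_finR: "finite R"
  using D_sub[of 0] D_fin[of 0] ty_facts(1)[of k] finite_subset by auto

lemma D_tailcard: "i < n (Suc k) \<Longrightarrow> card (Fs i - R) = m k - r (Suc k)"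
  using D_sub D_fin D_facts(3) by (simp add: card_Diff_subset D_finR)

lemma D_ne: "i < n (Suc k) \<Longrightarrow> Fs i - R \<noteq> {}"
proof
  assume i: "i < n (Suc k)" and e: "Fs i - R = {}"
  have "card (Fs i - R) = 0" unfolding e by simp
  with D_tailcard[OF i] ty_facts(2)[of k] show False by simp
qed

lemma D_chain_aux: "Suc (i + d) < n (Suc k) \<Longrightarrow> setless (Fs i - R) (Fs (Suc (i + d)) - R)"
proof (induction d)
  case 0
  then show ?case using D_facts(6) by simp
next
  case (Suc d)
  then have "setless (Fs i - R) (Fs (Suc (i + d)) - R)" by simp
  moreover have "setless (Fs (Suc (i + d)) - R) (Fs (Suc (Suc (i + d))) - R)"
    using D_facts(6) Suc.prems by simp
  moreover have "Fs (Suc (i + d)) - R \<noteq> {}" using D_ne Suc.prems by simp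
  ultimately have "setless (Fs i - R) (Fs (Suc (Suc (i + d))) - R)" by (rule setless_trans)
  then show ?case by simp
qed

lemma D_chain: "i < j \<Longrightarrow> j < n (Suc k) \<Longrightarrow> setless (Fs i - R) (Fs j - R)"
  using D_chain_aux[of i "j - i - 1"] by simp

lemma D_root: "i < n (Suc k) \<Longrightarrow> setless R (Fs i - R)"
proof (cases "i = 0")
  case True
  then show ?thesis using D_facts(5) by simp
next
  case False
  assume i: "i < n (Suc k)"
  have "setless (Fs 0 - R) (Fs i - R)" using D_chain[of 0 i] False i by simp
  moreover have "Fs 0 - R \<noteq> {}" using D_ne i by simp
  ultimately show ?thesis using setless_trans D_facts(5) by blast
qed

lemma D_inA: "x \<in> A \<Longrightarrow> \<exists>i<n (Suc k). x \<in> Fs i"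
  using D_facts(1) by auto

lemma D_posR: "\<alpha> \<in> R \<Longrightarrow> card {\<xi>\<in>A. \<xi> < \<alpha>} < r (Suc k)"
proof -
  assume a: "\<alpha> \<in> R"
  have "{\<xi>\<in>A. \<xi> < \<alpha>} \<subseteq> R - {\<alpha>}"
  proof
    fix \<xi> assume x: "\<xi> \<in> {\<xi>\<in>A. \<xi> < \<alpha>}"
    then obtain i where i: "i < n (Suc k)" "\<xi> \<in> Fs i" using D_inA by auto
    show "\<xi> \<in> R - {\<alpha>}"
    proof (rule ccontr)
      assume "\<xi> \<notin> R - {\<alpha>}"
      then have "\<xi> \<in> Fs i - R" using x i by auto
      then have "\<alpha> < \<xi>" using D_root[OF i(1)] a unfolding setless_def by blast
      then show False using x by auto
    qed
  qed
  then have "card {\<xi>\<in>A. \<xi> < \<alpha>} \<le> card (R - {\<alpha>})" using D_finR by (intro card_mono) auto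
  also have "\<dots> < card R" by (rule card_Diff1_less[OF D_finR a])
  finally show ?thesis using D_facts(3) by simp
qed

lemma D_posT:
  assumes i: "i < n (Suc k)" and a: "\<alpha> \<in> Fs i - R"
  shows "r (Suc k) \<le> card {\<xi>\<in>Fs i. \<xi> < \<alpha>}"
    "card {\<xi>\<in>A. \<xi> < \<alpha>} = r (Suc k) + i * (m k - r (Suc k)) + (card {\<xi>\<in>Fs i. \<xi> < \<alpha>} - r (Suc k))"
proof -
  have Ri: "R \<subseteq> Fs i" using D_sub i by simp
  have Rlt: "\<And>x. x \<in> R \<Longrightarrow> x < \<alpha>" using D_root[OF i] a unfolding setless_def by blast
  have e1: "{\<xi>\<in>Fs i. \<xi> < \<alpha>} = R \<union> {\<xi>\<in>Fs i - R. \<xi> < \<alpha>}" using Ri Rlt by auto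
  have finFi: "finite (Fs i)" using D_fin i by simp
  have c1: "card {\<xi>\<in>Fs i. \<xi> < \<alpha>} = r (Suc k) + card {\<xi>\<in>Fs i - R. \<xi> < \<alpha>}"
    unfolding e1 using D_facts(3) D_finR finFi by (subst card_Un_disjoint) auto
  then show "r (Suc k) \<le> card {\<xi>\<in>Fs i. \<xi> < \<alpha>}" by simp
  have e2: "{\<xi>\<in>A. \<xi> < \<alpha>} = R \<union> ((\<Union>i'<i. Fs i' - R) \<union> {\<xi>\<in>Fs i - R. \<xi> < \<alpha>})"
  proof (intro set_eqI iffI)
    fix \<xi> assume x: "\<xi> \<in> {\<xi>\<in>A. \<xi> < \<alpha>}"
    then obtain j where j: "j < n (Suc k)" "\<xi> \<in> Fs j" using D_inA by auto
    show "\<xi> \<in> R \<union> ((\<Union>i'<i. Fs i' - R) \<union> {\<xi>\<in>Fs i - R. \<xi> < \<alpha>})"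
    proof (cases "\<xi> \<in> R")
      case False
      have "\<not> i < j"
      proof
        assume "i < j"
        then have "\<alpha> < \<xi>" using D_chain[of i j] j a False unfolding setless_def by blast
        then show False using x less_asym by auto
      qed
      then show ?thesis using False j x by (cases "j = i") auto
    qed simp
  next
    fix \<xi> assume x: "\<xi> \<in> R \<union> ((\<Union>i'<i. Fs i' - R) \<union> {\<xi>\<in>Fs i - R. \<xi> < \<alpha>})"
    have "\<xi> \<in> A" using x Ri i D_facts(1) by auto
    moreover have "\<xi> < \<alpha>"
    proof -
      { assume "\<xi> \<in> R" then have ?thesis using Rlt by simp }
      moreover
      { fix i' assume "i' < i" "\<xi> \<in> Fs i' - R"
        then have ?thesis using D_chain[of i' i] i a unfolding setless_def by blast }
      ultimately show ?thesis using x by auto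
    qed
    ultimately show "\<xi> \<in> {\<xi>\<in>A. \<xi> < \<alpha>}" by simp
  qed
  have finU: "finite (\<Union>i'<i. Fs i' - R)" using D_fin i by auto
  have cU: "card (\<Union>i'<i. Fs i' - R) = i * (m k - r (Suc k))"
  proof -
    have disj: "(Fs a - R) \<inter> (Fs b - R) = {}" if "a < i" "b < i" "a \<noteq> b" for a b
    proof -
      have "Fs a \<inter> Fs b = R" using D_facts(4)[of a b] i that by simp
      then show ?thesis by blast
    qed
    have "card (\<Union>i'<i. Fs i' - R) = (\<Sum>i'<i. card (Fs i' - R))"
      using D_fin i disj by (intro card_UN_disjoint) auto
    also have "\<dots> = (\<Sum>i'<i. m k - r (Suc k))" using D_tailcard i by simp
    finally show ?thesis by simp
  qed
  have "card {\<xi>\<in>A. \<xi> < \<alpha>} = card R + card ((\<Union>i'<i. Fs i' - R) \<union> {\<xi>\<in>Fs i - R. \<xi> < \<alpha>})"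
    unfolding e2 using D_finR finU finFi by (subst card_Un_disjoint) auto
  also have "card ((\<Union>i'<i. Fs i' - R) \<union> {\<xi>\<in>Fs i - R. \<xi> < \<alpha>}) =
     card (\<Union>i'<i. Fs i' - R) + card {\<xi>\<in>Fs i - R. \<xi> < \<alpha>}"
  proof (rule card_Un_disjoint)
    show "finite (\<Union>i'<i. Fs i' - R)" by (rule finU)
    show "finite {\<xi>\<in>Fs i - R. \<xi> < \<alpha>}" using finFi by simp
    show "(\<Union>i'<i. Fs i' - R) \<inter> {\<xi>\<in>Fs i - R. \<xi> < \<alpha>} = {}"
    proof (rule ccontr)
      assume "(\<Union>i'<i. Fs i' - R) \<inter> {\<xi>\<in>Fs i - R. \<xi> < \<alpha>} \<noteq> {}"
      then obtain x i' where x: "i' < i" "x \<in> Fs i'" "x \<notin> R" "x \<in> Fs i" by blast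
      have "Fs i' \<inter> Fs i = R" using D_facts(4)[of i' i] i x(1) by simp
      then show False using x by blast
    qed
  qed
  finally show "card {\<xi>\<in>A. \<xi> < \<alpha>} = r (Suc k) + i * (m k - r (Suc k)) + (card {\<xi>\<in>Fs i. \<xi> < \<alpha>} - r (Suc k))"
    using cU c1 D_facts(3) by simp
qed

end

lemma XI:
  assumes X: "Xi F m n r \<alpha> (Suc k) = int i"
  shows "r (Suc k) \<le> normk F m \<alpha> k \<and>
    normk F m \<alpha> (Suc k) = r (Suc k) + i * (m k - r (Suc k)) + (normk F m \<alpha> k - r (Suc k))"
proof -
  define P where "P v \<longleftrightarrow> (\<exists>A\<in>level F m (Suc k). \<alpha> \<in> A \<and>
      (\<exists>Fs R. decomp F m n r k A Fs R \<and>
         ((\<alpha> \<in> R \<and> v = -1) \<or> (\<exists>i<n (Suc k). \<alpha> \<in> Fs i - R \<and> v = int i))))" for v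
  have XP: "Xi F m n r \<alpha> (Suc k) = (THE v. P v)" unfolding Xi_def P_def by simp
  define q where "q = normk F m \<alpha> (Suc k)"
  define g where "g = (if q < r (Suc k) then -1 else int ((q - r (Suc k)) div (m k - r (Suc k))))"
  have dpos: "m k - r (Suc k) > 0" using ty_facts(2)[of k] by simp
  have uniq: "v = g" if "P v" for v
  proof -
    obtain A Fs R where A: "A \<in> level F m (Suc k)" "\<alpha> \<in> A" "decomp F m n r k A Fs R"
      and c: "(\<alpha> \<in> R \<and> v = -1) \<or> (\<exists>i<n (Suc k). \<alpha> \<in> Fs i - R \<and> v = int i)"
      using \<open>P v\<close> unfolding P_def by blast
    have qA: "q = card {\<xi>\<in>A. \<xi> < \<alpha>}" unfolding q_def using normpos A by simp
    show ?thesis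
    proof (cases "\<alpha> \<in> R \<and> v = -1")
      case True
      then show ?thesis using D_posR[OF A(3)] qA g_def by simp
    next
      case False
      then obtain j where j: "j < n (Suc k)" "\<alpha> \<in> Fs j - R" "v = int j" using c by blast
      have lv: "Fs j \<in> level F m k" using D_facts(2)[OF A(3) j(1)] .
      have cq: "card {\<xi>\<in>Fs j. \<xi> < \<alpha>} = normk F m \<alpha> k" using normpos[OF lv] j by simp
      have b1: "r (Suc k) \<le> normk F m \<alpha> k" using D_posT(1)[OF A(3) j(1,2)] cq by simp
      have b2: "normk F m \<alpha> k < m k" by (rule normk_lt)
      have qe: "q = r (Suc k) + j * (m k - r (Suc k)) + (normk F m \<alpha> k - r (Suc k))"
        using D_posT(2)[OF A(3) j(1,2)] cq qA by simp
      have "(q - r (Suc k)) div (m k - r (Suc k)) = j"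
      proof -
        have "q - r (Suc k) = (normk F m \<alpha> k - r (Suc k)) + j * (m k - r (Suc k))" using qe by simp
        moreover have "normk F m \<alpha> k - r (Suc k) < m k - r (Suc k)" using b1 b2 by simp
        ultimately show ?thesis using dpos by simp
      qed
      then show ?thesis using g_def qe j(3) by simp
    qed
  qed
  obtain E where E: "E \<in> level F m (Suc k)" "\<alpha> \<in> E" using exlev by blast
  obtain Fs R where d: "decomp F m n r k E Fs R" using dec[OF E(1)] by blast
  obtain j where j: "j < n (Suc k)" "\<alpha> \<in> Fs j" using D_inA[OF d E(2)] by blast
  show "r (Suc k) \<le> normk F m \<alpha> k \<and>
    normk F m \<alpha> (Suc k) = r (Suc k) + i * (m k - r (Suc k)) + (normk F m \<alpha> k - r (Suc k))"
  proof (cases "\<alpha> \<in> R")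
    case True
    then have "P (-1)" unfolding P_def using E d by blast
    then have "(THE v. P v) = -1" using uniq by (intro the_equality) auto
    then show ?thesis using X XP by simp
  next
    case False
    then have "P (int j)" unfolding P_def using E d j by blast
    then have "(THE v. P v) = int j" using uniq by (intro the_equality) auto
    then have ij: "i = j" using X XP by simp
    have lv: "Fs j \<in> level F m k" using D_facts(2)[OF d j(1)] .
    have cq: "card {\<xi>\<in>Fs j. \<xi> < \<alpha>} = normk F m \<alpha> k" using normpos[OF lv] j by simp
    have aj: "\<alpha> \<in> Fs j - R" using False j by simp
    have b1: "r (Suc k) \<le> normk F m \<alpha> k" using D_posT(1)[OF d j(1) aj] cq by simp
    show ?thesis using D_posT(2)[OF d j(1) aj] b1 cq normpos[OF E] ij by simp
  qed
qed

end

definition rT :: "nat \<Rightarrow> nat" where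
  "rT k = (case k of 0 \<Rightarrow> 0 | Suc j \<Rightarrow> fst (prod_decode j))"

fun mT :: "nat \<Rightarrow> nat" where
  "mT 0 = 1"
| "mT (Suc k) = rT (Suc k) + (mT k - rT (Suc k)) * (2 * set_encode {..<mT k} + 2)"

declare mT.simps(2)[simp del]

definition nT :: "nat \<Rightarrow> nat" where
  "nT k = (case k of 0 \<Rightarrow> 2 | Suc j \<Rightarrow> 2 * set_encode {..<mT j} + 2)"

lemma fst_pd_le: "fst (prod_decode k) \<le> k"
  by (metis le_prod_encode_1 prod.collapse prod_decode_inverse)

lemma rT_Suc: "rT (Suc k) = fst (prod_decode k)"
  unfolding rT_def by simp

lemma nT_Suc: "nT (Suc k) = 2 * set_encode {..<mT k} + 2"
  unfolding nT_def by simp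

lemma mT_gt: "k < mT k"
proof (induction k)
  case 0
  then show ?case by simp
next
  case (Suc k)
  have r: "rT (Suc k) < mT k" using Suc fst_pd_le[of k] rT_Suc[of k] by simp
  have "(mT k - rT (Suc k)) * 2 \<le> (mT k - rT (Suc k)) * (2 * set_encode {..<mT k} + 2)"
    by (rule mult_le_mono2) simp
  then show ?case using r Suc by (simp add: mT.simps(2))
qed

lemma type_T: "is_type mT nT rT"
  unfolding is_type_def using mT_gt fst_pd_le rT_Suc nT_Suc
  by (auto intro: le_less_trans simp: mT.simps(2))

lemma good_T: "good_type mT nT rT"
proof -
  have "infinite {k. k \<ge> 1 \<and> rT k = q}" for q
  proof
    assume fin: "finite {k. k \<ge> 1 \<and> rT k = q}"
    have "(\<lambda>j. Suc (prod_encode (q, j))) ` UNIV \<subseteq> {k. k \<ge> 1 \<and> rT k = q}"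
      using rT_Suc by auto
    then have "finite ((\<lambda>j. Suc (prod_encode (q, j))) ` UNIV)" using fin finite_subset by blast
    moreover have "inj (\<lambda>j. Suc (prod_encode (q, j)))" by (auto simp: inj_def)
    ultimately have "finite (UNIV :: nat set)" using finite_imageD by blast
    then show False by simp
  qed
  then show ?thesis unfolding good_type_def using type_T by simp
qed

definition cdig :: "nat \<Rightarrow> nat \<Rightarrow> int" where
  "cdig l q = (if l = 0 \<or> q < rT l then int q else
     (if odd ((q - rT l) div (mT (l - 1) - rT l)) \<and>
         (q - rT l) mod (mT (l - 1) - rT l) \<notin> set_decode (((q - rT l) div (mT (l - 1) - rT l)) div 2)
      then - int q - 1 else int q))"

lemma cdig_cases: "cdig l q = int q \<or> cdig l q = - int q - 1"
  unfolding cdig_def by auto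

lemma cdig_inj: "cdig l q = cdig l q' \<Longrightarrow> q = q'"
  using cdig_cases[of l q] cdig_cases[of l q'] by auto

lemma cdig_bd: "q < mT l \<Longrightarrow> \<bar>cdig l q\<bar> \<le> int (mT l)"
  using cdig_cases[of l q] by auto

fun wT :: "nat \<Rightarrow> real" where
  "wT 0 = 1"
| "wT (Suc k) = wT k / (8 * (real (mT (Suc k)) + 1))"

lemma wT_pos: "wT k > 0"
proof (induction k)
  case (Suc k)
  have "8 * (real (mT (Suc k)) + 1) > 0" by simp
  then show ?case using Suc by simp
qed simp

lemma wT_Suc_le: "wT (Suc k) \<le> wT k / 8"
proof -
  have "8 \<le> 8 * (real (mT (Suc k)) + 1)" by simp
  then show ?thesis using wT_pos[of k] by (simp only: wT.simps) (rule divide_left_mono, auto)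
qed

lemma wT_decay: "wT (l + j) \<le> wT l * (1/8)^j"
proof (induction j)
  case 0
  then show ?case by simp
next
  case (Suc j)
  have "wT (l + Suc j) \<le> wT (l + j) / 8" using wT_Suc_le[of "l + j"] by simp
  also have "\<dots> \<le> wT l * (1/8)^j / 8" using Suc by simp
  finally show ?case by simp
qed

lemma wT_term: "real (mT (Suc k)) * wT (Suc k) \<le> wT k / 8"
proof -
  define M where "M = real (mT (Suc k))"
  have M: "M \<ge> 0" unfolding M_def by simp
  have "M * wT (Suc k) = wT k / 8 * (M / (M + 1))" unfolding M_def by simp
  also have "\<dots> \<le> wT k / 8 * 1"
    using M wT_pos[of k] by (intro mult_left_mono) auto
  finally show ?thesis unfolding M_def by simp
qed

lemma digsum_summable:
  fixes u :: "nat \<Rightarrow> int"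
  assumes b: "\<And>k. \<bar>u k\<bar> \<le> int (mT k)"
  shows "summable (\<lambda>k. real_of_int (u k) * wT k)"
proof (rule summable_comparison_test')
  show "summable (\<lambda>n. (1/8::real)^n)" by (rule summable_geometric) simp
  fix n :: nat assume n: "n \<ge> 1"
  then obtain j where j: "n = Suc j" by (cases n) auto
  have "norm (real_of_int (u n) * wT n) = \<bar>real_of_int (u n)\<bar> * wT n"
    using wT_pos[of n] by (simp add: abs_mult)
  also have "\<dots> \<le> real (mT n) * wT n"
    using b[of n] wT_pos[of n] by (intro mult_right_mono) (auto simp flip: of_int_abs)
  also have "\<dots> \<le> wT j / 8" using wT_term[of j] j by simp
  also have "\<dots> \<le> (1/8)^j / 8" using wT_decay[of 0 j] by simp
  finally show "norm (real_of_int (u n) * wT n) \<le> (1/8)^n" using j by simp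
qed

lemma cmp:
  fixes u v :: "nat \<Rightarrow> int"
  assumes bu: "\<And>k. \<bar>u k\<bar> \<le> int (mT k)" and bv: "\<And>k. \<bar>v k\<bar> \<le> int (mT k)"
    and eq: "\<And>k. k < l \<Longrightarrow> u k = v k" and lt: "u l < v l"
  shows "(\<Sum>k. real_of_int (u k) * wT k) < (\<Sum>k. real_of_int (v k) * wT k)"
proof -
  define h where "h k = real_of_int (v k - u k) * wT k" for k
  have su: "summable (\<lambda>k. real_of_int (u k) * wT k)" by (rule digsum_summable[OF bu])
  have sv: "summable (\<lambda>k. real_of_int (v k) * wT k)" by (rule digsum_summable[OF bv])
  have diff: "(\<Sum>k. real_of_int (v k) * wT k) - (\<Sum>k. real_of_int (u k) * wT k) = suminf h"
    unfolding h_def using suminf_diff[OF sv su] by (simp add: algebra_simps)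
  have sh: "summable h" unfolding h_def
    using summable_diff[OF sv su] by (simp add: algebra_simps)
  have split: "suminf h = (\<Sum>j. h (j + Suc l)) + (\<Sum>i<Suc l. h i)"
    by (rule suminf_split_initial_segment[OF sh])
  have "(\<Sum>i<Suc l. h i) = h l"
  proof -
    have "(\<Sum>i<l. h i) = 0" using eq unfolding h_def by (intro sum.neutral) auto
    then show ?thesis by simp
  qed
  moreover have hl: "h l \<ge> wT l"
  proof -
    have "real_of_int (v l - u l) \<ge> 1" using lt by simp
    then show ?thesis unfolding h_def using wT_pos[of l] by simp
  qed
  moreover have tail: "(\<Sum>j. h (j + Suc l)) \<ge> - (wT l / 4) * (8/7)"
  proof -
    have gs: "(\<lambda>j. - (wT l / 4) * (1/8::real)^j) sums (- (wT l / 4) * (1 / (1 - 1/8)))"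
      by (intro sums_mult geometric_sums) simp
    have bnd: "- (wT l / 4) * (1/8::real)^j \<le> h (j + Suc l)" for j
    proof -
      define k where "k = l + j"
      have "\<bar>v (Suc k) - u (Suc k)\<bar> \<le> 2 * int (mT (Suc k))"
        using bu[of "Suc k"] bv[of "Suc k"] by simp
      then have "real_of_int \<bar>v (Suc k) - u (Suc k)\<bar> \<le> real_of_int (2 * int (mT (Suc k)))"
        by (simp only: of_int_le_iff)
      then have a: "\<bar>real_of_int (v (Suc k) - u (Suc k))\<bar> \<le> 2 * real (mT (Suc k))"
        by simp
      have "\<bar>h (Suc k)\<bar> = \<bar>real_of_int (v (Suc k) - u (Suc k))\<bar> * wT (Suc k)"
        unfolding h_def abs_mult abs_of_pos[OF wT_pos[of "Suc k"]] by (rule refl)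
      also have "\<dots> \<le> 2 * real (mT (Suc k)) * wT (Suc k)"
        using a wT_pos[of "Suc k"] by (intro mult_right_mono) auto
      also have "\<dots> \<le> 2 * (wT k / 8)" using wT_term[of k] by linarith
      also have "\<dots> \<le> 2 * (wT l * (1/8)^j / 8)" using wT_decay[of l j] k_def by simp
      finally have "\<bar>h (Suc k)\<bar> \<le> wT l / 4 * (1/8)^j" by simp
      moreover have "j + Suc l = Suc k" using k_def by simp
      ultimately show ?thesis by (simp add: abs_le_iff)
    qed
    have "(\<Sum>j. - (wT l / 4) * (1/8::real)^j) \<le> (\<Sum>j. h (j + Suc l))"
    proof (rule suminf_le[OF bnd])
      show "summable (\<lambda>j. - (wT l / 4) * (1/8::real)^j)" using gs by (simp add: sums_iff)
      show "summable (\<lambda>j. h (j + Suc l))" by (rule summable_ignore_initial_segment[OF sh])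
    qed
    moreover have "(\<Sum>j. - (wT l / 4) * (1/8::real)^j) = - (wT l / 4) * (8/7)"
      using sums_unique[OF gs] by simp
    ultimately show ?thesis by simp
  qed
  ultimately have "suminf h > 0" using split wT_pos[of l] by simp
  then show ?thesis using diff by simp
qed

lemma Delta_eq: "Delta F m \<alpha> \<beta> = enat l \<Longrightarrow> k < l \<Longrightarrow> normk F m \<alpha> k = normk F m \<beta> k"
proof -
  assume D: "Delta F m \<alpha> \<beta> = enat l" and k: "k < l"
  have ex: "\<exists>k. normk F m \<alpha> k \<noteq> normk F m \<beta> k"
    using D unfolding Delta_def by (auto split: if_splits)
  then have "(LEAST k. normk F m \<alpha> k \<noteq> normk F m \<beta> k) = l"
    using D unfolding Delta_def by simp
  then show ?thesis using not_less_Least[of k "\<lambda>k. normk F m \<alpha> k \<noteq> normk F m \<beta> k"] k by auto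
qed

lemma cdig_calc:
  assumes e: "e < mT l0 - rT (Suc l0)"
  shows "cdig (Suc l0) (rT (Suc l0) + I * (mT l0 - rT (Suc l0)) + e) =
    (if odd I \<and> e \<notin> set_decode (I div 2)
     then - int (rT (Suc l0) + I * (mT l0 - rT (Suc l0)) + e) - 1
     else int (rT (Suc l0) + I * (mT l0 - rT (Suc l0)) + e))"
proof -
  define d where "d = mT l0 - rT (Suc l0)"
  have dp: "d > 0" using e d_def by simp
  have q: "rT (Suc l0) + I * d + e - rT (Suc l0) = e + I * d" by simp
  have dv: "(e + I * d) div d = I" using e dp d_def by (simp add: div_mult_self2)
  have md: "(e + I * d) mod d = e" using e dp d_def by simp
  have c: "cdig (Suc l0) Q = (if Q < rT (Suc l0) then int Q else
     if odd ((Q - rT (Suc l0)) div d) \<and> (Q - rT (Suc l0)) mod d \<notin> set_decode (((Q - rT (Suc l0)) div d) div 2)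
     then - int Q - 1 else int Q)" for Q unfolding cdig_def d_def by simp
  show ?thesis unfolding d_def[symmetric] c q dv md by simp
qed

locale sch2 = sch F mT nT rT for F :: "'a::linorder set set" +
  assumes fc: "fully_capturing F mT nT rT" and unc: "uncountable (UNIV::'a set)"
begin

definition X :: "'a \<Rightarrow> real" where
  "X \<alpha> = (\<Sum>k. real_of_int (cdig k (normk F mT \<alpha> k)) * wT k)"

lemma Xlt: "(\<And>k. k < l \<Longrightarrow> normk F mT \<alpha> k = normk F mT \<beta> k) \<Longrightarrow>
   cdig l (normk F mT \<alpha> l) < cdig l (normk F mT \<beta> l) \<Longrightarrow> X \<alpha> < X \<beta>"
  unfolding X_def by (rule cmp) (auto intro: cdig_bd normk_lt)

lemma X_inj: "inj X"
proof (rule injI, rule ccontr)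
  fix \<alpha> \<beta> assume eq: "X \<alpha> = X \<beta>" and ne: "\<alpha> \<noteq> \<beta>"
  define P where "P k \<longleftrightarrow> normk F mT \<alpha> k \<noteq> normk F mT \<beta> k" for k
  have ex: "\<exists>k. P k" using norm_sep[OF ne] P_def by simp
  define l where "l = (LEAST k. P k)"
  have Pl: "P l" unfolding l_def using LeastI_ex[OF ex] .
  have below: "normk F mT \<alpha> k = normk F mT \<beta> k" if "k < l" for k
    using not_less_Least[of k P] that P_def l_def by auto
  have "cdig l (normk F mT \<alpha> l) \<noteq> cdig l (normk F mT \<beta> l)"
    using Pl cdig_inj P_def by blast
  then have "X \<alpha> < X \<beta> \<or> X \<beta> < X \<alpha>"
    using Xlt[of l \<alpha> \<beta>] Xlt[of l \<beta> \<alpha>] below by (metis linorder_neqE)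
  then show False using eq by simp
qed

lemma X_unc: "uncountable (range X)"
  using countable_image_inj_on[of X UNIV] X_inj unc by blast

lemma entangled: "k_entangled k (range X)"
  unfolding k_entangled_def
proof (intro conjI allI impI)
  show "uncountable (range X)" by (rule X_unc)
  fix \<A> :: "real set set" and t :: "nat \<Rightarrow> bool"
  assume H: "\<A> \<subseteq> {a. a \<subseteq> range X \<and> finite a \<and> card a = k} \<and> uncountable \<A> \<and> pairwise disjnt \<A>"
  then have HA: "\<And>a. a \<in> \<A> \<Longrightarrow> a \<subseteq> range X \<and> finite a \<and> card a = k"
    and Hu: "uncountable \<A>" and Hd: "pairwise disjnt \<A>" by auto
  define Dof where "Dof a = X -` a" for a
  have XD: "X ` Dof a = a" if "a \<in> \<A>" for a
    using HA[OF that] unfolding Dof_def by (simp add: image_vimage_eq Int_absorb2)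
  have Dfin: "finite (Dof a) \<and> card (Dof a) = k" if "a \<in> \<A>" for a
    using HA[OF that] finite_vimageI[OF _ X_inj] card_vimage_inj[OF X_inj] unfolding Dof_def by auto
  have kpos: "k > 0"
  proof (rule ccontr)
    assume "\<not> k > 0"
    then have "\<And>a. a \<in> \<A> \<Longrightarrow> a = {}" using HA by fastforce
    then have "\<A> \<subseteq> {{}}" by blast
    then have "countable \<A>" using countable_subset[of \<A> "{{}}"] by simp
    then show False using Hu by simp
  qed
  define tau where "tau a j = (LEAST i. sorted_list_of_set a ! i = X (elt (Dof a) j))" for a j
  have eltD: "elt (Dof a) j \<in> Dof a" if "a \<in> \<A>" "j < k" for a j
  proof -
    have "j < length (sorted_list_of_set (Dof a))" using Dfin[OF that(1)] that(2) by simp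
    then have "sorted_list_of_set (Dof a) ! j \<in> set (sorted_list_of_set (Dof a))" by (rule nth_mem)
    then show ?thesis using Dfin[OF that(1)] unfolding elt_def by simp
  qed
  have tau: "tau a j < k \<and> elt a (tau a j) = X (elt (Dof a) j)" if "a \<in> \<A>" "j < k" for a j
  proof -
    have xa: "X (elt (Dof a) j) \<in> a" using eltD[OF that] unfolding Dof_def by simp
    have sa: "set (sorted_list_of_set a) = a" "length (sorted_list_of_set a) = k" using HA[OF that(1)] by auto
    obtain i where i: "i < k" "sorted_list_of_set a ! i = X (elt (Dof a) j)"
      using xa sa by (metis in_set_conv_nth)
    have "sorted_list_of_set a ! tau a j = X (elt (Dof a) j)"
      unfolding tau_def by (rule LeastI[of _ i]) (rule i(2))
    moreover have "tau a j \<le> i" unfolding tau_def by (rule Least_le) (rule i(2))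
    ultimately show ?thesis using i(1) unfolding elt_def by simp
  qed
  have tau_surj: "tau a ` {..<k} = {..<k}" if "a \<in> \<A>" for a
  proof (rule endo_inj_surj)
    show "finite {..<k}" by simp
    show "tau a ` {..<k} \<subseteq> {..<k}" using tau[OF that] by auto
    show "inj_on (tau a) {..<k}"
    proof (rule inj_onI)
      fix j1 j2 assume j: "j1 \<in> {..<k}" "j2 \<in> {..<k}" "tau a j1 = tau a j2"
      then have "X (elt (Dof a) j1) = X (elt (Dof a) j2)" using tau[OF that] by (metis lessThan_iff)
      then have "elt (Dof a) j1 = elt (Dof a) j2" using X_inj by (simp add: inj_eq)
      then show "j1 = j2" unfolding elt_def using Dfin[OF that] j
        by (simp add: nth_eq_iff_index_eq)
    qed
  qed
  define sb where "sb a = Max ((\<lambda>p. rho F mT (fst p) (snd p)) ` (Dof a \<times> Dof a))" for a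
  have sb: "rho F mT \<xi> \<eta> \<le> sb a" if "a \<in> \<A>" "\<xi> \<in> Dof a" "\<eta> \<in> Dof a" for a \<xi> \<eta>
    unfolding sb_def using Dfin[OF that(1)] that(2,3) by (intro Max_ge) force+
  define key where "key a = (map (tau a) [0..<k], sb a)" for a
  obtain \<kappa> where uk: "uncountable {a\<in>\<A>. key a = \<kappa>}"
  proof -
    have eqA: "\<A> = (\<Union>\<kappa>\<in>(UNIV :: (nat list \<times> nat) set). {a\<in>\<A>. key a = \<kappa>})" by auto
    have "\<exists>\<kappa>. uncountable {a\<in>\<A>. key a = \<kappa>}"
    proof (rule ccontr)
      assume "\<not> (\<exists>\<kappa>. uncountable {a\<in>\<A>. key a = \<kappa>})"
      then have "\<And>\<kappa>. countable {a\<in>\<A>. key a = \<kappa>}" by blast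
      then have "countable (\<Union>\<kappa>\<in>(UNIV :: (nat list \<times> nat) set). {a\<in>\<A>. key a = \<kappa>})"
        by (intro countable_UN[OF countableI_type])
      then show False using Hu eqA by simp
    qed
    then show ?thesis using that by blast
  qed
  obtain \<tau>s s where \<kappa>: "\<kappa> = (\<tau>s, s)" by (cases \<kappa>)
  define \<A>k where "\<A>k = {a\<in>\<A>. key a = \<kappa>}"
  define S where "S = Dof ` \<A>k"
  have S_unc: "uncountable S"
  proof
    assume "countable S"
    then have c: "countable ((`) X ` S)" by simp
    have sub: "\<A>k \<subseteq> (`) X ` S"
    proof
      fix a assume a: "a \<in> \<A>k"
      then have "a = X ` Dof a" using XD \<A>k_def by simp
      moreover have "Dof a \<in> S" unfolding S_def using a by simp
      ultimately show "a \<in> (`) X ` S" by (rule image_eqI)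
    qed
    have "countable \<A>k" by (rule countable_subset[OF sub c])
    then show False using uk \<A>k_def by simp
  qed
  have S_ok: "\<forall>A\<in>S. A \<noteq> {} \<and> finite A"
    unfolding S_def \<A>k_def using Dfin kpos by fastforce
  have "infinite {l. \<exists>D. inj_on D {..<nT l} \<and> D ` {..<nT l} \<subseteq> S \<and>
                        rtt_system D (nT l) \<and> fully_captured F mT nT rT D (nT l) l}"
    using fc[unfolded fully_capturing_def, rule_format, of S] S_unc S_ok by simp
  then obtain l where l: "s < l" and lin: "l \<in> {l. \<exists>D. inj_on D {..<nT l} \<and> D ` {..<nT l} \<subseteq> S \<and>
                        rtt_system D (nT l) \<and> fully_captured F mT nT rT D (nT l) l}"
    unfolding infinite_nat_iff_unbounded by blast
  then obtain D where Dinj: "inj_on D {..<nT l}" and Dsub: "D ` {..<nT l} \<subseteq> S"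
    and Dcap: "fully_captured F mT nT rT D (nT l) l" by blast
  obtain l0 where l0: "l = Suc l0" using l by (cases l) auto
  have sl0: "s \<le> l0" using l l0 by simp
  define N where "N = nT l"
  have N: "N = 2 * set_encode {..<mT l0} + 2" unfolding N_def l0 nT_Suc ..
  define aD where "aD i = X ` D i" for i
  have aD: "aD i \<in> \<A>k \<and> Dof (aD i) = D i" if "i < N" for i
  proof -
    have "D i \<in> S" using Dsub that N_def by auto
    then obtain a where a: "a \<in> \<A>k" "D i = Dof a" unfolding S_def by blast
    then have "aD i = a" unfolding aD_def using XD \<A>k_def by simp
    then show ?thesis using a by simp
  qed
  have aDA: "aD i \<in> \<A>" "key (aD i) = \<kappa>" if "i < N" for i using aD[OF that] \<A>k_def by auto
  have aD_ne: "aD i \<noteq> aD j" if "i < N" "j < N" "i \<noteq> j" for i j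
  proof
    assume "aD i = aD j"
    moreover have "D i = Dof (aD i)" "D j = Dof (aD j)" using aD that by auto
    ultimately have "D i = D j" by simp
    moreover have "i \<in> {..<nT l}" "j \<in> {..<nT l}" using that N_def by auto
    ultimately show False using Dinj that(3) by (simp add: inj_on_eq_iff)
  qed
  have D_disj: "D i \<inter> D j = {}" if "i < N" "j < N" "i \<noteq> j" for i j
  proof -
    have "disjnt (aD i) (aD j)" using Hd aDA(1)[OF that(1)] aDA(1)[OF that(2)] aD_ne[OF that]
      unfolding pairwise_def by blast
    then have "Dof (aD i) \<inter> Dof (aD j) = {}" unfolding Dof_def disjnt_def by auto
    then show ?thesis using aD that by simp
  qed
  have N2: "N \<ge> 2" using N by simp
  have rr0: "card (D 0 \<inter> D 1) = 0" using D_disj[of 0 1] N2 by simp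
  have mm: "card (D 0) = k"
  proof -
    have "0 < N" using N2 by simp
    then have "Dof (aD 0) = D 0" "card (Dof (aD 0)) = k" using aD[of 0] Dfin[OF aDA(1)[of 0]] by auto
    then show ?thesis by simp
  qed
  have capt: "(\<forall>i<N. \<forall>a<k. Xi F mT nT rT (elt (D i) a) l = int i) \<and>
      (\<forall>i j a. i < j \<and> j < N \<and> 0 \<le> a \<and> a < k \<longrightarrow>
          Delta F mT (elt (D i) a) (elt (D j) a) = enat l)"
    using Dcap unfolding fully_captured_def Let_def rr0 mm N_def by simp
  have XIi: "Xi F mT nT rT (elt (D i) j) (Suc l0) = int i" if "i < N" "j < k" for i j
    using capt that l0 by simp
  have DLi: "Delta F mT (elt (D i) j) (elt (D i') j) = enat l" if "i < i'" "i' < N" "j < k" for i i' j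
    using capt that by simp
  define r0 where "r0 = rT (Suc l0)"
  define dd where "dd = mT l0 - r0"
  have nf: "r0 \<le> normk F mT (elt (D i) j) l0 \<and>
     normk F mT (elt (D i) j) (Suc l0) = r0 + i * dd + (normk F mT (elt (D i) j) l0 - r0)"
    if "i < N" "j < k" for i j
    using XI[OF XIi[OF that]] unfolding r0_def dd_def .
  define p where "p j = normk F mT (elt (D 0) j) l0" for j
  have pi: "normk F mT (elt (D i) j) l0 = p j" if "i < N" "j < k" for i j
  proof (cases "i = 0")
    case True
    then show ?thesis unfolding p_def by simp
  next
    case False
    then have "Delta F mT (elt (D 0) j) (elt (D i) j) = enat l" using DLi that by simp
    then show ?thesis unfolding p_def using Delta_eq l0 by (metis lessI)
  qed
  have p_inj: "j1 = j2" if "p j1 = p j2" "j1 < k" "j2 < k" for j1 j2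
  proof (rule ccontr)
    assume ne: "j1 \<noteq> j2"
    have a0: "aD 0 \<in> \<A>" "key (aD 0) = \<kappa>" "Dof (aD 0) = D 0" using aDA aD N2 by auto
    have e1: "elt (D 0) j1 \<in> Dof (aD 0)" "elt (D 0) j2 \<in> Dof (aD 0)"
      using eltD[OF a0(1)] that a0(3) by auto
    have "sb (aD 0) = s" using a0(2) \<kappa> unfolding key_def by simp
    then have "rho F mT (elt (D 0) j1) (elt (D 0) j2) \<le> l0" using sb[OF a0(1) e1] sl0 by simp
    moreover have "elt (D 0) j1 \<noteq> elt (D 0) j2"
      unfolding elt_def using mm that ne aD[of 0] Dfin[OF a0(1)] a0(3) N2
      by (simp add: nth_eq_iff_index_eq)
    ultimately have "p j1 \<noteq> p j2" unfolding p_def by (rule norm_inj)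
    then show False using that by simp
  qed
  have p_bd: "r0 \<le> p j \<and> p j < mT l0" if "j < k" for j
    using nf[of 0 j] N2 that normk_lt unfolding p_def by auto
  define T where "T = (\<lambda>j. p j - r0) ` {j. j < k \<and> t (\<tau>s ! j)}"
  have finT: "finite T" unfolding T_def by simp
  define sE where "sE = set_encode T"
  have T_mem: "p j - r0 \<in> T \<longleftrightarrow> t (\<tau>s ! j)" if "j < k" for j
  proof
    assume "p j - r0 \<in> T"
    then obtain j' where j': "j' < k" "t (\<tau>s ! j')" "p j - r0 = p j' - r0" unfolding T_def by auto
    then have "p j = p j'" using p_bd that by (metis le_add_diff_inverse)
    then have "j = j'" using p_inj that j' by blast
    then show "t (\<tau>s ! j)" using j' by simp
  qed (use that in \<open>auto simp: T_def\<close>)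
  have sE_le: "sE \<le> set_encode {..<mT l0}"
  proof -
    have "T \<subseteq> {..<mT l0}" unfolding T_def using p_bd by fastforce
    then show ?thesis unfolding sE_def set_encode_def by (intro sum_mono2) auto
  qed
  define I where "I = 2 * sE"
  define J where "J = Suc (2 * sE)"
  have IJ: "I < J" "J < N" using sE_le N unfolding I_def J_def by auto
  define a where "a = aD I"
  define b where "b = aD J"
  have ab: "a \<in> \<A>" "b \<in> \<A>" "a \<noteq> b" "key a = \<kappa>" "key b = \<kappa>" "Dof a = D I" "Dof b = D J"
    using aDA aD aD_ne IJ unfolding a_def b_def by auto
  have tauk: "tau c j = \<tau>s ! j" if "key c = \<kappa>" "j < k" for c j
    using that \<kappa> unfolding key_def by auto
  have decT: "set_decode sE = T" unfolding sE_def using finT by simp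
  show "\<exists>a\<in>\<A>. \<exists>b\<in>\<A>. a \<noteq> b \<and> (\<forall>i<k. if t i then elt a i < elt b i else elt b i < elt a i)"
  proof (intro bexI conjI allI impI)
    show "a \<in> \<A>" "b \<in> \<A>" "a \<noteq> b" using ab by auto
    fix i assume i: "i < k"
    obtain j where j: "j < k" "tau a j = i" using tau_surj[OF ab(1)] i by (metis imageE lessThan_iff)
    have tj: "\<tau>s ! j = i" using tauk[OF ab(4) j(1)] j by simp
    have tbj: "tau b j = i" using tauk[OF ab(5) j(1)] tj by simp
    define \<alpha> where "\<alpha> = elt (D I) j"
    define \<beta> where "\<beta> = elt (D J) j"
    have ea: "elt a i = X \<alpha>" using tau[OF ab(1) j(1)] j ab(6) unfolding \<alpha>_def by simp
    have eb: "elt b i = X \<beta>" using tau[OF ab(2) j(1)] tbj ab(7) unfolding \<beta>_def by simp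
    have below: "normk F mT \<alpha> k' = normk F mT \<beta> k'" if "k' < l" for k'
      using Delta_eq[OF DLi[OF IJ j(1)] that] unfolding \<alpha>_def \<beta>_def .
    have e: "p j - r0 < mT l0 - rT (Suc l0)" using p_bd[OF j(1)] r0_def by auto
    have qa: "normk F mT \<alpha> l = rT (Suc l0) + I * (mT l0 - rT (Suc l0)) + (p j - r0)"
      using nf[of I j] pi[of I j] IJ j(1) l0 unfolding \<alpha>_def dd_def r0_def by simp
    have qb: "normk F mT \<beta> l = rT (Suc l0) + J * (mT l0 - rT (Suc l0)) + (p j - r0)"
      using nf[of J j] pi[of J j] IJ j(1) l0 unfolding \<beta>_def dd_def r0_def by simp
    have ca: "cdig l (normk F mT \<alpha> l) = int (normk F mT \<alpha> l)"
    proof -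
      have "cdig (Suc l0) (rT (Suc l0) + I * (mT l0 - rT (Suc l0)) + (p j - r0)) =
         int (rT (Suc l0) + I * (mT l0 - rT (Suc l0)) + (p j - r0))"
        using cdig_calc[OF e, of I] unfolding I_def by simp
      then show ?thesis using qa l0 by simp
    qed
    have cb: "cdig l (normk F mT \<beta> l) =
       (if p j - r0 \<notin> T then - int (normk F mT \<beta> l) - 1 else int (normk F mT \<beta> l))"
    proof -
      have "cdig (Suc l0) (rT (Suc l0) + J * (mT l0 - rT (Suc l0)) + (p j - r0)) =
         (if p j - r0 \<notin> T then - int (rT (Suc l0) + J * (mT l0 - rT (Suc l0)) + (p j - r0)) - 1
          else int (rT (Suc l0) + J * (mT l0 - rT (Suc l0)) + (p j - r0)))"
        using cdig_calc[OF e, of J] unfolding J_def decT[symmetric] by simp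
      then show ?thesis using qb l0 by simp
    qed
    have ab_lt: "normk F mT \<alpha> l < normk F mT \<beta> l" using qa qb IJ(1)
      using e by simp
    show "if t i then elt a i < elt b i else elt b i < elt a i"
    proof (cases "t i")
      case True
      then have "p j - r0 \<in> T" using T_mem[OF j(1)] tj by simp
      then have "cdig l (normk F mT \<alpha> l) < cdig l (normk F mT \<beta> l)" using ca cb ab_lt by simp
      then have "X \<alpha> < X \<beta>" using Xlt below by blast
      then show ?thesis using True ea eb by simp
    next
      case False
      then have "p j - r0 \<notin> T" using T_mem[OF j(1)] tj by simp
      then have "cdig l (normk F mT \<beta> l) < cdig l (normk F mT \<alpha> l)" using ca cb by simp
      then have "X \<beta> < X \<alpha>" using Xlt below by (metis)
      then show ?thesis using False ea eb by simp
    qed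
  qed
qed

end

theorem mainTheorem14:
  assumes "is_omega1 TYPE('a::wellorder)"
    and "FCA_Delta TYPE('a)"
  shows "\<exists>E :: real set. uncountable E \<and> (\<forall>k. k_entangled k E)"
proof -
  have unc: "uncountable (UNIV::'a set)" using assms(1) unfolding is_omega1_def by simp
  have inf: "infinite (UNIV::'a set)" using unc countable_finite by blast
  obtain F :: "'a set set" where F: "scheme F mT nT rT UNIV" "fully_capturing F mT nT rT"
    using assms(2) good_T unfolding FCA_Delta_def by blast
  interpret sch2 F
    by unfold_locales (use F type_T inf unc in auto)
  show ?thesis using X_unc entangled by blast
qed

end
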